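(* Let $0<p<1$, let $m$ be a median of $\vartheta(G(n,p))$ (i.e. $\Pr(\vartheta(G(n,p))\leq m)\geq1/2$ and $\Pr(\vartheta(G(n,p))\geq m)\geq1/2$), let $\vartheta_0>0$ be any number, and let $\xi\geq10$. Then $$\Pr\big(m+\xi\leq\vartheta(G(n,p))\leq\vartheta_0\big)\leq 2\exp(-\xi^2/(5\vartheta_0)).$$
   Context: $G(n,p)$ is the random graph on $\{1,\dots,n\}$ with each possible edge present independently with probability $p$. $\vartheta(G)$ is the Lovász number of $G$; equivalently, $\vartheta(G)$ is the maximum of $\sum_{i=1}^n c(v_i)$ over all tuples $(v_1,\dots,v_n)$ of vectors in some $\mathbb R^d$ with $v_i\perp v_j$ whenever $\{i,j\}$ is an edge of $G$, where $c(a)=a_1^2/\|a\|^2$ for $a\neq0$ and $c(0)=0$. *)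

theory Defs
  imports "HOL-Analysis.Analysis" "HOL-Probability.Probability"
begin

text \<open>Graphs on vertex set {1..n} are represented by their edge indicator
  E :: nat set \<Rightarrow> bool on unordered pairs {i,j}.\<close>

definition pairs :: "nat \<Rightarrow> nat set set" where
  "pairs n = {{i, j} | i j. 1 \<le> i \<and> i < j \<and> j \<le> n}"

definition gnp :: "nat \<Rightarrow> real \<Rightarrow> (nat set \<Rightarrow> bool) pmf" where
  "gnp n p = Pi_pmf (pairs n) False (\<lambda>_. bernoulli_pmf p)"

text \<open>Vectors in R^d are represented as functions nat \<Rightarrow> real, using coordinates 0..<d;
  coordinate 0 is the "first" coordinate.\<close>
definition inner_d :: "nat \<Rightarrow> (nat \<Rightarrow> real) \<Rightarrow> (nat \<Rightarrow> real) \<Rightarrow> real" where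
  "inner_d d a b = (\<Sum>k<d. a k * b k)"

definition cval :: "nat \<Rightarrow> (nat \<Rightarrow> real) \<Rightarrow> real" where
  "cval d a = (if inner_d d a a = 0 then 0 else (a 0)^2 / inner_d d a a)"

definition lovasz_theta :: "nat \<Rightarrow> (nat set \<Rightarrow> bool) \<Rightarrow> real" where
  "lovasz_theta n E = Sup {(\<Sum>i=1..n. cval d (v i)) | d v.
      d \<ge> 1 \<and> (\<forall>i j. 1 \<le> i \<and> i \<le> n \<and> 1 \<le> j \<and> j \<le> n \<and> i \<noteq> j \<and> E {i, j}
                 \<longrightarrow> inner_d d (v i) (v j) = 0)}"

end

theory Submission
  imports Defs
begin


lemma exp_quarter_le: "exp (1/4::real) \<le> 4/3"
proof -
  have "1 + (-1/4::real) \<le> exp (-1/4)" by (rule exp_ge_add_one_self)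
  hence "3/4 \<le> exp (-1/4::real)" by simp
  hence "1 / exp (-1/4::real) \<le> 1 / (3/4)" by (intro divide_left_mono) auto
  thus ?thesis by (simp add: exp_minus field_simps)
qed

lemma exp_mhalf_le: "exp (-1/2::real) \<le> 2/3"
proof -
  have "1 + (1/2::real) \<le> exp (1/2)" by (rule exp_ge_add_one_self)
  hence "1 / exp (1/2::real) \<le> 1 / (3/2)" by (intro divide_left_mono) auto
  thus ?thesis by (simp add: exp_minus field_simps)
qed

lemma key_mono:
  fixes t :: real assumes "-1/2 \<le> t" "t \<le> 0"
  shows "exp (-t - t^2) + exp t \<le> 2"
proof -
  let ?h = "\<lambda>t::real. exp (-t - t^2) + exp t"
  have "?h t \<le> ?h 0"
  proof (rule DERIV_nonneg_imp_nondecreasing[of t 0 ?h])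
    show "t \<le> 0" by fact
    fix x :: real assume x: "t \<le> x" "x \<le> 0"
    have d: "(?h has_real_derivative (exp (-x - x^2) * (-1 - 2*x) + exp x)) (at x)"
      by (auto intro!: derivative_eq_intros simp: power2_eq_square)
    have "1 + 2*x \<le> 1 + (2*x + x^2)" by simp
    also have "\<dots> \<le> exp (2*x + x^2)" by (rule exp_ge_add_one_self)
    finally have a: "1 + 2*x \<le> exp (2*x + x^2)" .
    have "(1 + 2*x) * exp (-x - x^2) \<le> exp (2*x + x^2) * exp (-x - x^2)"
      using a by (intro mult_right_mono) auto
    also have "\<dots> = exp x" by (simp add: exp_add[symmetric])
    finally have "0 \<le> exp (-x - x^2) * (-1 - 2*x) + exp x" by (simp add: algebra_simps)
    thus "\<exists>y. (?h has_real_derivative y) (at x) \<and> 0 \<le> y" using d by blast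
  qed
  thus ?thesis by simp
qed

lemma talagrand_numeric:
  fixes r :: real assumes "0 < r" "r \<le> 1"
  shows "\<exists>l. 0 \<le> l \<and> l \<le> 1 \<and> exp ((1-l)^2/4) * r powr (-l) \<le> 2 - r"
proof (cases "r \<le> exp (-1/2)")
  case True
  have "exp ((1-0)^2/4) * r powr (-0) = exp (1/4::real)" using assms by simp
  also have "\<dots> \<le> 2 - r" using True exp_quarter_le exp_mhalf_le by linarith
  finally show ?thesis by (intro exI[of _ 0]) auto
next
  case False
  define t where "t = ln r"
  have r: "r = exp t" using assms t_def by simp
  have t1: "-1/2 < t" using False r by simp
  have t2: "t \<le> 0" using assms t_def by simp
  have "exp ((1-(1+2*t))^2/4) * r powr (-(1+2*t)) = exp (t^2) * exp (-(1+2*t) * t)"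
    using assms by (simp add: powr_def t_def power2_eq_square)
  also have "\<dots> = exp (-t - t^2)" by (simp add: exp_add[symmetric] algebra_simps power2_eq_square)
  also have "\<dots> \<le> 2 - r" using key_mono[of t] t1 t2 r by simp
  finally show ?thesis using t1 t2 by (intro exI[of _ "1+2*t"]) auto
qed



lemma pmf_integrable_bounded:
  fixes f :: "'a \<Rightarrow> real"
  assumes "\<And>x. \<bar>f x\<bar> \<le> C"
  shows "integrable (measure_pmf M) f"
  by (rule measure_pmf.integrable_const_bound[of _ C]) (use assms in auto)

lemma integral_bind_pmf_bounded:
  fixes f :: "'b \<Rightarrow> real"
  assumes "\<And>x. 0 \<le> f x" "\<And>x. f x \<le> C"
  shows "(\<integral>y. f y \<partial>bind_pmf M N) = (\<integral>x. (\<integral>y. f y \<partial>N x) \<partial>M)"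
proof -
  have C: "\<bar>f x\<bar> \<le> C" for x using assms[of x] by simp
  have inner: "(\<integral>\<^sup>+y. ennreal (f y) \<partial>N x) = ennreal (\<integral>y. f y \<partial>N x)" for x
    by (rule nn_integral_eq_integral) (auto intro: pmf_integrable_bounded C assms)
  have "(\<integral>y. f y \<partial>bind_pmf M N) = enn2real (\<integral>\<^sup>+y. ennreal (f y) \<partial>bind_pmf M N)"
    by (rule integral_eq_nn_integral) (auto intro: assms)
  also have "\<dots> = enn2real (\<integral>\<^sup>+x. ennreal (\<integral>y. f y \<partial>N x) \<partial>M)"
    by (simp add: inner)
  also have "\<dots> = (\<integral>x. (\<integral>y. f y \<partial>N x) \<partial>M)"
    by (rule integral_eq_nn_integral[symmetric]) (auto intro!: integral_nonneg_AE assms)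
  finally show ?thesis .
qed

lemma prob_bind_pmf:
  "measure_pmf.prob (bind_pmf M N) S = (\<integral>x. measure_pmf.prob (N x) S \<partial>M)"
proof -
  have "measure_pmf.prob (bind_pmf M N) S = (\<integral>y. indicator S y \<partial>bind_pmf M N)" by simp
  also have "\<dots> = (\<integral>x. (\<integral>y. indicator S y \<partial>N x) \<partial>M)"
    by (rule integral_bind_pmf_bounded[of _ 1]) (auto simp: indicator_def)
  also have "\<dots> = (\<integral>x. measure_pmf.prob (N x) S \<partial>M)" by simp
  finally show ?thesis .
qed

lemma prob_mix:
  assumes "0 \<le> l" "l \<le> 1"
  shows "measure_pmf.prob (bind_pmf (bernoulli_pmf l) (\<lambda>b. if b then N1 else N2)) S
     = l * measure_pmf.prob N1 S + (1 - l) * measure_pmf.prob N2 S"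
  using assms by (simp add: prob_bind_pmf)

lemma integral_pair_pmf_bounded:
  fixes f :: "'a \<times> 'b \<Rightarrow> real"
  assumes "\<And>x. 0 \<le> f x" "\<And>x. f x \<le> C"
  shows "(\<integral>z. f z \<partial>pair_pmf A B) = (\<integral>a. (\<integral>b. f (a,b) \<partial>B) \<partial>A)"
proof -
  have "(\<integral>z. f z \<partial>pair_pmf A B) = (\<integral>a. (\<integral>z. f z \<partial>bind_pmf B (\<lambda>b. return_pmf (a,b))) \<partial>A)"
    unfolding pair_pmf_def by (rule integral_bind_pmf_bounded[of _ C]) (use assms in auto)
  also have "\<dots> = (\<integral>a. (\<integral>b. f (a,b) \<partial>B) \<partial>A)"
  proof (intro Bochner_Integration.integral_cong refl)
    fix a
    have "(\<integral>z. f z \<partial>bind_pmf B (\<lambda>b. return_pmf (a,b))) = (\<integral>b. (\<integral>z. f z \<partial>return_pmf (a,b)) \<partial>B)"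
      by (rule integral_bind_pmf_bounded[of _ C]) (use assms in auto)
    thus "(\<integral>z. f z \<partial>bind_pmf B (\<lambda>b. return_pmf (a,b))) = (\<integral>b. f (a,b) \<partial>B)" by simp
  qed
  finally show ?thesis .
qed

lemma holder_pmf:
  fixes X Y :: "'a \<Rightarrow> real" and M :: "'a pmf"
  assumes l: "0 \<le> l" "l \<le> 1"
    and pos: "\<And>x. 0 < X x" "\<And>x. 0 < Y x"
    and bd: "\<And>x. X x \<le> C" "\<And>x. Y x \<le> C"
  shows "(\<integral>x. X x powr l * Y x powr (1-l) \<partial>M) \<le> (\<integral>x. X x \<partial>M) powr l * (\<integral>x. Y x \<partial>M) powr (1-l)"
proof -
  have intX: "integrable M X" using pos bd by (intro pmf_integrable_bounded[of _ C]) (auto simp: abs_of_pos)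
  have intY: "integrable M Y" using pos bd by (intro pmf_integrable_bounded[of _ C]) (auto simp: abs_of_pos)
  define a where "a = (\<integral>x. X x \<partial>M)"
  define b where "b = (\<integral>x. Y x \<partial>M)"
  have a: "0 < a" unfolding a_def
    using measure_pmf.integral_less_AE_space[of M "\<lambda>_. 0" X] intX pos
    by (simp add: measure_pmf.emeasure_space_1)
  have b: "0 < b" unfolding b_def
    using measure_pmf.integral_less_AE_space[of M "\<lambda>_. 0" Y] intY pos
    by (simp add: measure_pmf.emeasure_space_1)
  have pw: "X x powr l * Y x powr (1-l) \<le> a powr l * b powr (1-l) * (l * (X x / a) + (1-l) * (Y x / b))" for x
  proof -
    have "(X x / a) powr l * (Y x / b) powr (1-l) \<le> l * (X x / a) + (1-l) * (Y x / b)"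
      using pos[of x] a b l by (intro Youngs_inequality_0) auto
    hence "a powr l * b powr (1-l) * ((X x / a) powr l * (Y x / b) powr (1-l))
         \<le> a powr l * b powr (1-l) * (l * (X x / a) + (1-l) * (Y x / b))"
      by (intro mult_left_mono) auto
    also have "a powr l * b powr (1-l) * ((X x / a) powr l * (Y x / b) powr (1-l))
       = X x powr l * Y x powr (1-l)"
      using pos[of x] a b by (simp add: powr_divide)
    finally show ?thesis .
  qed
  have eqI: "(\<integral>x. l * (X x / a) + (1-l) * (Y x / b) \<partial>M) = l * (a / a) + (1-l) * (b / b)"
    by (subst Bochner_Integration.integral_add[OF integrable_mult_right[OF integrable_divide[OF intX]]
          integrable_mult_right[OF integrable_divide[OF intY]]])
       (simp add: a_def b_def)
  have "(\<integral>x. X x powr l * Y x powr (1-l) \<partial>M)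
      \<le> (\<integral>x. a powr l * b powr (1-l) * (l * (X x / a) + (1-l) * (Y x / b)) \<partial>M)"
  proof (rule integral_mono)
    show "integrable M (\<lambda>x. a powr l * b powr (1-l) * (l * (X x / a) + (1-l) * (Y x / b)))"
      by (intro integrable_mult_right Bochner_Integration.integrable_add integrable_divide intX intY)
    show "integrable M (\<lambda>x. X x powr l * Y x powr (1-l))"
    proof (rule pmf_integrable_bounded[of _ "C powr l * C powr (1-l)"])
      fix x
      have "X x powr l * Y x powr (1-l) \<le> C powr l * C powr (1-l)"
        using pos[of x] bd[of x] l by (intro mult_mono powr_mono2) auto
      thus "\<bar>X x powr l * Y x powr (1-l)\<bar> \<le> C powr l * C powr (1-l)" by simp
    qed
  qed (rule pw)
  also have "\<dots> = a powr l * b powr (1-l) * (\<integral>x. l * (X x / a) + (1-l) * (Y x / b) \<partial>M)"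
    by simp
  also have "\<dots> = a powr l * b powr (1-l)" using a b eqI by simp
  finally show ?thesis unfolding a_def b_def .
qed



definition dsum :: "'i set \<Rightarrow> ('i \<Rightarrow> 'a) pmf \<Rightarrow> ('i \<Rightarrow> 'a) \<Rightarrow> real" where
  "dsum I \<nu> x = (\<Sum>j\<in>I. (measure_pmf.prob \<nu> {y. y j \<noteq> x j})^2)"

definition rho2 :: "'i set \<Rightarrow> ('i \<Rightarrow> 'a) set \<Rightarrow> ('i \<Rightarrow> 'a) \<Rightarrow> real" where
  "rho2 I A x = Inf ((\<lambda>\<nu>. dsum I \<nu> x) ` {\<nu>. set_pmf \<nu> \<subseteq> A})"

lemma dsum_nonneg: "0 \<le> dsum I \<nu> x"
  unfolding dsum_def by (intro sum_nonneg) auto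

lemma dsum_le_card: "dsum I \<nu> x \<le> card I"
proof -
  have "dsum I \<nu> x \<le> (\<Sum>j\<in>I. 1)" unfolding dsum_def
    by (intro sum_mono) (auto simp: power_le_one)
  thus ?thesis by simp
qed

lemma rho2_lower: "set_pmf \<nu> \<subseteq> A \<Longrightarrow> rho2 I A x \<le> dsum I \<nu> x"
  unfolding rho2_def
  by (rule cInf_lower) (auto intro!: bdd_belowI[of _ 0] dsum_nonneg)

lemma rho2_greatest:
  assumes "A \<noteq> {}" "\<And>\<nu>. set_pmf \<nu> \<subseteq> A \<Longrightarrow> c \<le> dsum I \<nu> x"
  shows "c \<le> rho2 I A x"
proof -
  obtain a where "a \<in> A" using assms by auto
  hence ne: "{\<nu>. set_pmf \<nu> \<subseteq> A} \<noteq> {}" by (auto intro!: exI[of _ "return_pmf a"])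
  show ?thesis unfolding rho2_def
    by (rule cInf_greatest) (use ne assms in auto)
qed

lemma rho2_nonneg: "A \<noteq> {} \<Longrightarrow> 0 \<le> rho2 I A x"
  by (rule rho2_greatest) (auto intro: dsum_nonneg)

lemma rho2_le_card: assumes "A \<noteq> {}" shows "rho2 I A x \<le> card I"
proof -
  obtain a where "a \<in> A" using assms by auto
  hence "rho2 I A x \<le> dsum I (return_pmf a) x" by (intro rho2_lower) auto
  thus ?thesis using dsum_le_card[of I "return_pmf a" x] by linarith
qed

lemma rho2_approx:
  assumes "A \<noteq> {}" "0 < e"
  obtains \<nu> where "set_pmf \<nu> \<subseteq> A" "dsum I \<nu> x < rho2 I A x + e"
proof -
  obtain a where "a \<in> A" using assms by auto
  hence ne: "(\<lambda>\<nu>. dsum I \<nu> x) ` {\<nu>. set_pmf \<nu> \<subseteq> A} \<noteq> {}" by (auto intro!: exI[of _ "return_pmf a"])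
  have "Inf ((\<lambda>\<nu>. dsum I \<nu> x) ` {\<nu>. set_pmf \<nu> \<subseteq> A}) < rho2 I A x + e"
    using assms unfolding rho2_def by simp
  from cInf_lessD[OF ne this] show ?thesis using that by auto
qed

lemma prob_map_upd_other:
  assumes "j \<noteq> i"
  shows "measure_pmf.prob (map_pmf (\<lambda>y. y(i := g y)) \<nu>) {z. z j \<noteq> c}
       = measure_pmf.prob \<nu> {y. y j \<noteq> c}"
proof -
  have "(\<lambda>y. y(i := g y)) -` {z. z j \<noteq> c} = {y. y j \<noteq> c}" using assms by auto
  thus ?thesis by simp
qed

lemma convex_sq:
  fixes a b l :: real assumes l: "0 \<le> l" "l \<le> 1"
  shows "(l*a + (1-l)*b)^2 \<le> l * a^2 + (1-l) * b^2"
proof -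
  have "l * a^2 + (1-l) * b^2 - (l*a + (1-l)*b)^2 = l * (1-l) * (a-b)^2"
    by (simp add: power2_eq_square algebra_simps)
  moreover have "0 \<le> l * (1-l) * (a-b)^2" using l by simp
  ultimately show ?thesis by linarith
qed

lemma rho2_step_mix:
  assumes fin: "finite I" and i: "i \<notin> I" and l: "0 \<le> l" "l \<le> 1"
    and ne: "{y. y(i:=w) \<in> A} \<noteq> {}"
  shows "rho2 (insert i I) A (x(i:=w)) \<le>
     (1-l)^2 + l * rho2 I {y. y(i:=w) \<in> A} x + (1-l) * rho2 I {y. \<exists>w'. y(i:=w') \<in> A} x"
proof (rule field_le_epsilon)
  fix e :: real assume e: "0 < e"
  define Aw where "Aw = {y. y(i:=w) \<in> A}"
  define B where "B = {y. \<exists>w'. y(i:=w') \<in> A}"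
  have neB: "B \<noteq> {}" using ne unfolding B_def by auto
  obtain \<nu>1 where n1: "set_pmf \<nu>1 \<subseteq> Aw" "dsum I \<nu>1 x < rho2 I Aw x + e"
    using rho2_approx[OF ne[folded Aw_def] e] by blast
  obtain \<nu>2 where n2: "set_pmf \<nu>2 \<subseteq> B" "dsum I \<nu>2 x < rho2 I B x + e"
    using rho2_approx[OF neB e] by blast
  define g where "g y = (SOME w'. y(i:=w') \<in> A)" for y
  have g: "y \<in> B \<Longrightarrow> y(i := g y) \<in> A" for y unfolding B_def g_def by (auto intro: someI)
  define N1 where "N1 = map_pmf (\<lambda>y. y(i := w)) \<nu>1"
  define N2 where "N2 = map_pmf (\<lambda>y. y(i := g y)) \<nu>2"
  define \<nu> where "\<nu> = bind_pmf (bernoulli_pmf l) (\<lambda>b. if b then N1 else N2)"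
  have setn: "set_pmf \<nu> \<subseteq> A"
    using n1(1) n2(1) g unfolding \<nu>_def N1_def N2_def Aw_def by (auto split: if_splits) blast+
  have pr: "measure_pmf.prob \<nu> S = l * measure_pmf.prob N1 S + (1-l) * measure_pmf.prob N2 S" for S
    unfolding \<nu>_def using l by (rule prob_mix)
  have pj: "measure_pmf.prob \<nu> {z. z j \<noteq> (x(i:=w)) j}
      = l * measure_pmf.prob \<nu>1 {y. y j \<noteq> x j} + (1-l) * measure_pmf.prob \<nu>2 {y. y j \<noteq> x j}"
    if "j \<in> I" for j
  proof -
    have "j \<noteq> i" using that i by auto
    thus ?thesis unfolding pr N1_def N2_def
      using prob_map_upd_other[of j i "\<lambda>_. w" \<nu>1 "x j"] prob_map_upd_other[of j i g \<nu>2 "x j"]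
      by simp
  qed
  have pi: "measure_pmf.prob \<nu> {z. z i \<noteq> (x(i:=w)) i} \<le> 1 - l"
  proof -
    have "(\<lambda>y. y(i := w)) -` {z. z i \<noteq> w} = {}" by auto
    hence "measure_pmf.prob N1 {z. z i \<noteq> w} = 0" unfolding N1_def by simp
    moreover have "measure_pmf.prob N2 {z. z i \<noteq> w} \<le> 1" by simp
    ultimately show ?thesis unfolding pr using l by (simp add: mult_left_le)
  qed
  have "rho2 (insert i I) A (x(i:=w)) \<le> dsum (insert i I) \<nu> (x(i:=w))"
    by (rule rho2_lower[OF setn])
  also have "\<dots> = (measure_pmf.prob \<nu> {z. z i \<noteq> (x(i:=w)) i})^2
      + (\<Sum>j\<in>I. (l * measure_pmf.prob \<nu>1 {y. y j \<noteq> x j} + (1-l) * measure_pmf.prob \<nu>2 {y. y j \<noteq> x j})^2)"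
    unfolding dsum_def using fin i pj by (simp add: sum.insert)
  also have "\<dots> \<le> (1-l)^2 + (\<Sum>j\<in>I. l * (measure_pmf.prob \<nu>1 {y. y j \<noteq> x j})^2
                                  + (1-l) * (measure_pmf.prob \<nu>2 {y. y j \<noteq> x j})^2)"
  proof (intro add_mono sum_mono)
    show "(measure_pmf.prob \<nu> {z. z i \<noteq> (x(i:=w)) i})^2 \<le> (1-l)^2"
      using pi by (intro power_mono) auto
    fix j
    show "(l * measure_pmf.prob \<nu>1 {y. y j \<noteq> x j} + (1-l) * measure_pmf.prob \<nu>2 {y. y j \<noteq> x j})^2
       \<le> l * (measure_pmf.prob \<nu>1 {y. y j \<noteq> x j})^2 + (1-l) * (measure_pmf.prob \<nu>2 {y. y j \<noteq> x j})^2"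
      by (rule convex_sq[OF l])
  qed
  also have "\<dots> = (1-l)^2 + l * dsum I \<nu>1 x + (1-l) * dsum I \<nu>2 x"
    unfolding dsum_def by (simp add: sum.distrib sum_distrib_left)
  also have "\<dots> \<le> (1-l)^2 + l * (rho2 I Aw x + e) + (1-l) * (rho2 I B x + e)"
    using n1(2) n2(2) l by (intro add_mono mult_left_mono) auto
  also have "\<dots> = (1-l)^2 + l * rho2 I Aw x + (1-l) * rho2 I B x + e"
    by (simp add: algebra_simps)
  finally show "rho2 (insert i I) A (x(i:=w)) \<le>
     (1-l)^2 + l * rho2 I {y. y(i:=w) \<in> A} x + (1-l) * rho2 I {y. \<exists>w'. y(i:=w') \<in> A} x + e"
    unfolding Aw_def B_def .
qed

lemma rho2_step_B:
  assumes fin: "finite I" and i: "i \<notin> I"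
    and ne: "{y. \<exists>w'. y(i:=w') \<in> A} \<noteq> {}"
  shows "rho2 (insert i I) A (x(i:=w)) \<le> 1 + rho2 I {y. \<exists>w'. y(i:=w') \<in> A} x"
proof (rule field_le_epsilon)
  fix e :: real assume e: "0 < e"
  define B where "B = {y. \<exists>w'. y(i:=w') \<in> A}"
  obtain \<nu>2 where n2: "set_pmf \<nu>2 \<subseteq> B" "dsum I \<nu>2 x < rho2 I B x + e"
    using rho2_approx[OF ne[folded B_def] e] by blast
  define g where "g y = (SOME w'. y(i:=w') \<in> A)" for y
  have g: "y \<in> B \<Longrightarrow> y(i := g y) \<in> A" for y unfolding B_def g_def by (auto intro: someI)
  define \<nu> where "\<nu> = map_pmf (\<lambda>y. y(i := g y)) \<nu>2"
  have setn: "set_pmf \<nu> \<subseteq> A" using n2(1) g unfolding \<nu>_def by auto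
  have pj: "measure_pmf.prob \<nu> {z. z j \<noteq> (x(i:=w)) j} = measure_pmf.prob \<nu>2 {y. y j \<noteq> x j}"
    if "j \<in> I" for j
  proof -
    have "j \<noteq> i" using that i by auto
    thus ?thesis unfolding \<nu>_def using prob_map_upd_other[of j i g \<nu>2 "x j"] by simp
  qed
  have "rho2 (insert i I) A (x(i:=w)) \<le> dsum (insert i I) \<nu> (x(i:=w))"
    by (rule rho2_lower[OF setn])
  also have "\<dots> = (measure_pmf.prob \<nu> {z. z i \<noteq> (x(i:=w)) i})^2 + dsum I \<nu>2 x"
    unfolding dsum_def using fin i pj by (simp add: sum.insert)
  also have "\<dots> \<le> 1 + (rho2 I B x + e)"
    using n2(2) by (intro add_mono) (auto simp: power_le_one)
  finally show "rho2 (insert i I) A (x(i:=w)) \<le> 1 + rho2 I {y. \<exists>w'. y(i:=w') \<in> A} x + e"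
    unfolding B_def by simp
qed



lemma exp_powr_real: "exp (a::real) powr l = exp (l * a)"
  by (simp add: powr_def)

lemma integral_exp_rho2_bounds:
  fixes P :: "('i \<Rightarrow> 'a) pmf"
  assumes "A \<noteq> {}"
  shows "integrable P (\<lambda>x. exp (rho2 I A x / 4))"
    "0 < (\<integral>x. exp (rho2 I A x / 4) \<partial>P)"
proof -
  have b: "\<bar>exp (rho2 I A x / 4)\<bar> \<le> exp (card I / 4)" for x
    using rho2_le_card[OF assms, of I x] by simp
  show int: "integrable P (\<lambda>x. exp (rho2 I A x / 4))"
    by (rule pmf_integrable_bounded[OF b])
  show "0 < (\<integral>x. exp (rho2 I A x / 4) \<partial>P)"
    using measure_pmf.integral_less_AE_space[of P "\<lambda>_. 0" "\<lambda>x. exp (rho2 I A x / 4)"] int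
    by (simp add: measure_pmf.emeasure_space_1)
qed

theorem talagrand:
  fixes M :: "'i \<Rightarrow> 'a pmf"
  assumes "finite I"
  shows "0 < measure_pmf.prob (Pi_pmf I d M) A \<Longrightarrow>
    (\<integral>x. exp (rho2 I A x / 4) \<partial>Pi_pmf I d M) \<le> 1 / measure_pmf.prob (Pi_pmf I d M) A"
  using assms
proof (induction I arbitrary: A rule: finite_induct)
  case empty
  have inA: "(\<lambda>_. d) \<in> A" using empty by (simp add: indicator_def split: if_splits)
  hence ne: "A \<noteq> {}" by auto
  have "rho2 {} A x = 0" for x
    using rho2_nonneg[OF ne, of "{}" x] rho2_lower[of "return_pmf (\<lambda>_. d)" A "{}" x] inA
    by (simp add: dsum_def)
  thus ?case using inA by simp
next
  case (insert i I)
  define P where "P = Pi_pmf I d M"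
  define Aw where "Aw w = {y. y(i:=w) \<in> A}" for w
  define B where "B = {y. \<exists>w'. y(i:=w') \<in> A}"
  define pA where "pA = measure_pmf.prob (Pi_pmf (insert i I) d M) A"
  define pB where "pB = measure_pmf.prob P B"
  define pw where "pw w = measure_pmf.prob P (Aw w)" for w
  have P': "Pi_pmf (insert i I) d M = map_pmf (\<lambda>(w,f). f(i:=w)) (pair_pmf (M i) P)"
    unfolding P_def using insert.hyps by (rule Pi_pmf_insert)
  have pA_pos: "0 < pA" using insert.prems unfolding pA_def .
  have pA_eq: "pA = (\<integral>w. pw w \<partial>M i)"
  proof -
    have "pA = (\<integral>z. indicator ((\<lambda>(w,f). f(i:=w)) -` A) z \<partial>pair_pmf (M i) P)"
      unfolding pA_def P' by simp
    also have "\<dots> = (\<integral>w. (\<integral>f. indicator ((\<lambda>(w,f). f(i:=w)) -` A) (w,f) \<partial>P) \<partial>M i)"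
      by (rule integral_pair_pmf_bounded[of _ 1]) (auto simp: indicator_def)
    also have "\<dots> = (\<integral>w. (\<integral>f. indicator (Aw w) f \<partial>P) \<partial>M i)"
      unfolding Aw_def by (intro Bochner_Integration.integral_cong refl) (simp add: indicator_def)
    also have "\<dots> = (\<integral>w. pw w \<partial>M i)"
      unfolding pw_def by simp
    finally show ?thesis .
  qed
  have pw_le: "pw w \<le> pB" for w
    unfolding pw_def pB_def Aw_def B_def by (intro measure_pmf.finite_measure_mono) auto
  have pB_pos: "0 < pB"
  proof (rule ccontr)
    assume "\<not> 0 < pB"
    hence "pw w = 0" for w using pw_le[of w] measure_nonneg[of P "Aw w"] unfolding pw_def by linarith
    hence "pA = 0" using pA_eq by simp
    thus False using pA_pos by simp
  qed
  have neB: "B \<noteq> {}" using pB_pos unfolding pB_def by auto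
  have neA: "A \<noteq> {}" using pA_pos unfolding pA_def by auto
  define C where "C = exp (card (insert i I) / 4)"
  define F where "F x = exp (rho2 (insert i I) A x / 4)" for x
  have F_pos: "0 \<le> F x" for x unfolding F_def by simp
  have F_le: "F x \<le> C" for x unfolding F_def C_def using rho2_le_card[OF neA] by simp
  define G where "G w = (\<integral>f. F (f(i:=w)) \<partial>P)" for w
  have intF: "(\<integral>x. F x \<partial>Pi_pmf (insert i I) d M) = (\<integral>w. G w \<partial>M i)"
  proof -
    have "(\<integral>x. F x \<partial>Pi_pmf (insert i I) d M) = (\<integral>z. F ((\<lambda>(w,f). f(i:=w)) z) \<partial>pair_pmf (M i) P)"
      unfolding P' by simp
    also have "\<dots> = (\<integral>w. (\<integral>f. F ((\<lambda>(w,f). f(i:=w)) (w,f)) \<partial>P) \<partial>M i)"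
      by (rule integral_pair_pmf_bounded[of _ C]) (auto intro: F_pos F_le)
    also have "\<dots> = (\<integral>w. G w \<partial>M i)"
      unfolding G_def by simp
    finally show ?thesis .
  qed
  have IH: "0 < measure_pmf.prob P S \<Longrightarrow> (\<integral>x. exp (rho2 I S x / 4) \<partial>P) \<le> 1 / measure_pmf.prob P S" for S
    using insert.IH[of S] unfolding P_def by simp
  have intFw: "integrable P (\<lambda>f. F (f(i:=w)))" for w
    by (rule pmf_integrable_bounded[of _ C]) (use F_pos F_le in \<open>auto simp: abs_of_nonneg\<close>)
  have G_nn: "0 \<le> G w" for w unfolding G_def by (intro integral_nonneg_AE) (auto intro: F_pos)
  have G_C: "G w \<le> C" for w unfolding G_def
    by (rule measure_pmf.integral_le_const[OF intFw]) (auto intro: F_le)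
  have G_le: "G w \<le> (2 - pw w / pB) / pB" for w
  proof (cases "pw w = 0")
    case True
    have pt: "F (f(i:=w)) \<le> exp (1/4) * exp (rho2 I B f / 4)" for f
    proof -
      have "rho2 (insert i I) A (f(i:=w)) \<le> 1 + rho2 I B f"
        using rho2_step_B[OF insert.hyps(1,2) neB[unfolded B_def], of f w] unfolding B_def .
      hence "exp (rho2 (insert i I) A (f(i:=w)) / 4) \<le> exp (1/4 + rho2 I B f / 4)" by simp
      thus ?thesis unfolding F_def by (simp add: exp_add)
    qed
    have intB: "integrable P (\<lambda>f. exp (rho2 I B f / 4))" by (rule integral_exp_rho2_bounds(1)[OF neB])
    have "G w \<le> (\<integral>f. exp (1/4) * exp (rho2 I B f / 4) \<partial>P)"
      unfolding G_def by (intro integral_mono intFw integrable_mult_right intB pt)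
    also have "\<dots> = exp (1/4) * (\<integral>f. exp (rho2 I B f / 4) \<partial>P)" by simp
    also have "\<dots> \<le> exp (1/4) * (1 / pB)"
      using IH[of B] pB_pos unfolding pB_def by (intro mult_left_mono) auto
    also have "\<dots> \<le> 2 / pB"
      using exp_quarter_le pB_pos by (simp add: divide_right_mono)
    finally show ?thesis using True by simp
  next
    case False
    have pwpos: "0 < pw w" using False measure_nonneg[of P "Aw w"] unfolding pw_def by linarith
    have neAw: "Aw w \<noteq> {}" using pwpos unfolding pw_def by auto
    define r where "r = pw w / pB"
    have r: "0 < r" "r \<le> 1" unfolding r_def using pwpos pB_pos pw_le[of w] by auto
    obtain l where l: "0 \<le> l" "l \<le> 1" "exp ((1-l)^2/4) * r powr (-l) \<le> 2 - r"
      using talagrand_numeric[OF r] by blast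
    define X where "X f = exp (rho2 I (Aw w) f / 4)" for f
    define Y where "Y f = exp (rho2 I B f / 4)" for f
    define K where "K = exp (card I / 4)"
    have XK: "X f \<le> K" for f unfolding X_def K_def using rho2_le_card[OF neAw] by simp
    have YK: "Y f \<le> K" for f unfolding Y_def K_def using rho2_le_card[OF neB] by simp
    have pt: "F (f(i:=w)) \<le> exp ((1-l)^2/4) * (X f powr l * Y f powr (1-l))" for f
    proof -
      have "rho2 (insert i I) A (f(i:=w)) \<le> (1-l)^2 + l * rho2 I (Aw w) f + (1-l) * rho2 I B f"
        using rho2_step_mix[OF insert.hyps(1,2) l(1,2) neAw[unfolded Aw_def], of f]
        unfolding Aw_def B_def .
      hence "exp (rho2 (insert i I) A (f(i:=w)) / 4)
         \<le> exp ((1-l)^2/4 + l * (rho2 I (Aw w) f / 4) + (1-l) * (rho2 I B f / 4))"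
        by simp
      thus ?thesis unfolding F_def X_def Y_def exp_powr_real by (simp add: exp_add)
    qed
    have intXY: "integrable P (\<lambda>f. X f powr l * Y f powr (1-l))"
    proof (rule pmf_integrable_bounded[of _ "K powr l * K powr (1-l)"])
      fix f
      have "X f powr l * Y f powr (1-l) \<le> K powr l * K powr (1-l)"
        using XK[of f] YK[of f] l by (intro mult_mono powr_mono2) (auto simp: X_def Y_def)
      thus "\<bar>X f powr l * Y f powr (1-l)\<bar> \<le> K powr l * K powr (1-l)" by simp
    qed
    have "G w \<le> (\<integral>f. exp ((1-l)^2/4) * (X f powr l * Y f powr (1-l)) \<partial>P)"
      unfolding G_def by (intro integral_mono intFw integrable_mult_right intXY pt)
    also have "\<dots> = exp ((1-l)^2/4) * (\<integral>f. X f powr l * Y f powr (1-l) \<partial>P)" by simp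
    also have "\<dots> \<le> exp ((1-l)^2/4) * ((\<integral>f. X f \<partial>P) powr l * (\<integral>f. Y f \<partial>P) powr (1-l))"
      by (intro mult_left_mono holder_pmf[OF l(1,2), of X Y K]) (auto simp: X_def Y_def XK[unfolded X_def] YK[unfolded Y_def])
    also have "\<dots> \<le> exp ((1-l)^2/4) * ((1 / pw w) powr l * (1 / pB) powr (1-l))"
    proof (intro mult_left_mono mult_mono powr_mono2)
      show "(\<integral>f. X f \<partial>P) \<le> 1 / pw w" using IH[of "Aw w"] pwpos unfolding pw_def X_def by simp
      show "(\<integral>f. Y f \<partial>P) \<le> 1 / pB" using IH[of B] pB_pos unfolding pB_def Y_def by simp
      show "0 \<le> (\<integral>f. X f \<partial>P)" unfolding X_def by (intro integral_nonneg_AE) auto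
      show "0 \<le> (\<integral>f. Y f \<partial>P)" unfolding Y_def by (intro integral_nonneg_AE) auto
    qed (use l in auto)
    also have "(1 / pw w) powr l * (1 / pB) powr (1-l) = r powr (-l) / pB"
      using pwpos pB_pos unfolding r_def
      by (simp add: powr_divide powr_minus powr_diff field_simps)
    also have "exp ((1-l)^2/4) * (r powr (-l) / pB) \<le> (2 - r) / pB"
      using l(3) pB_pos by (simp add: divide_right_mono)
    finally show ?thesis unfolding r_def .
  qed
  have "(\<integral>w. G w \<partial>M i) \<le> (\<integral>w. (2 - pw w / pB) / pB \<partial>M i)"
  proof (rule integral_mono[OF _ _ G_le])
    show "integrable (M i) G"
      by (rule pmf_integrable_bounded[of _ C]) (use G_nn G_C in auto)
    show "integrable (M i) (\<lambda>w. (2 - pw w / pB) / pB)"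
      by (intro integrable_divide Bochner_Integration.integrable_diff integrable_divide)
         (auto intro!: pmf_integrable_bounded[of _ 1] simp: pw_def)
  qed
  also have "\<dots> = (2 - pA / pB) / pB"
  proof -
    have ipw: "integrable (M i) pw" by (auto intro!: pmf_integrable_bounded[of _ 1] simp: pw_def)
    show ?thesis unfolding pA_eq
      by (subst integral_divide_zero, subst Bochner_Integration.integral_diff)
         (use ipw in \<open>auto intro!: integrable_divide\<close>)
  qed
  also have "\<dots> \<le> 1 / pA"
  proof -
    have "pA * (2 * pB - pA) \<le> pB^2"
      using zero_le_power2[of "pB - pA"] by (simp add: power2_eq_square algebra_simps)
    thus ?thesis using pA_pos pB_pos by (simp add: field_simps power2_eq_square)
  qed
  finally show ?case unfolding F_def pA_def intF[unfolded F_def] .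
qed



corollary talagrand_tail:
  fixes M :: "'i \<Rightarrow> 'a pmf"
  assumes "finite I" "0 < measure_pmf.prob (Pi_pmf I d M) A"
  shows "measure_pmf.prob (Pi_pmf I d M) {x. s \<le> rho2 I A x}
           \<le> exp (-s/4) / measure_pmf.prob (Pi_pmf I d M) A"
proof -
  let ?P = "Pi_pmf I d M"
  let ?pA = "measure_pmf.prob ?P A"
  have neA: "A \<noteq> {}" using assms(2) by auto
  have int: "integrable ?P (\<lambda>x. exp (rho2 I A x / 4))" by (rule integral_exp_rho2_bounds(1)[OF neA])
  have "measure_pmf.prob ?P {x. s \<le> rho2 I A x} = (\<integral>x. indicator {x. s \<le> rho2 I A x} x \<partial>?P)"
    by simp
  also have "\<dots> \<le> (\<integral>x. exp (-s/4) * exp (rho2 I A x / 4) \<partial>?P)"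
  proof (rule integral_mono)
    show "integrable ?P (\<lambda>x. indicator {x. s \<le> rho2 I A x} x :: real)"
      by (rule pmf_integrable_bounded[of _ 1]) (auto simp: indicator_def)
    show "integrable ?P (\<lambda>x. exp (-s/4) * exp (rho2 I A x / 4))" by (intro integrable_mult_right int)
    fix x
    show "indicator {x. s \<le> rho2 I A x} x \<le> exp (-s/4) * exp (rho2 I A x / 4)"
    proof (cases "s \<le> rho2 I A x")
      case True
      hence "0 \<le> -s/4 + rho2 I A x / 4" by simp
      hence "1 \<le> exp (-s/4 + rho2 I A x / 4)" by simp
      thus ?thesis using True by (simp add: exp_add[symmetric])
    qed simp
  qed
  also have "\<dots> = exp (-s/4) * (\<integral>x. exp (rho2 I A x / 4) \<partial>?P)" by simp
  also have "\<dots> \<le> exp (-s/4) * (1 / ?pA)"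
    by (intro mult_left_mono talagrand assms) auto
  finally show ?thesis by simp
qed

lemma Pi_pmf_blocks:
  fixes S :: "'k \<Rightarrow> 'x set" and \<beta> :: "'x \<Rightarrow> 'k"
  assumes "finite K" "\<forall>k\<in>K. finite (S k)" "\<forall>k\<in>K. \<forall>x\<in>S k. \<beta> x = k"
  shows "Pi_pmf (\<Union>k\<in>K. S k) d p =
    map_pmf (\<lambda>F x. if x \<in> (\<Union>k\<in>K. S k) then F (\<beta> x) x else d) (Pi_pmf K dd (\<lambda>k. Pi_pmf (S k) d p))"
  using assms
proof (induction K rule: finite_induct)
  case empty
  show ?case by (simp add: map_pmf_def bind_return_pmf)
next
  case (insert k K)
  let ?U = "\<Union>k\<in>K. S k"
  let ?Q = "\<lambda>k. Pi_pmf (S k) d p"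
  let ?gK = "\<lambda>F x. if x \<in> ?U then F (\<beta> x) x else d"
  let ?g = "\<lambda>F x. if x \<in> (\<Union>k\<in>insert k K. S k) then F (\<beta> x) x else d"
  have disj: "S k \<inter> ?U = {}" using insert by fastforce
  have finU: "finite ?U" using insert by auto
  have "Pi_pmf (\<Union>k\<in>insert k K. S k) d p = Pi_pmf (S k \<union> ?U) d p" by simp
  also have "\<dots> = map_pmf (\<lambda>(f,g) x. if x \<in> S k then f x else g x) (pair_pmf (?Q k) (Pi_pmf ?U d p))"
    using insert disj finU by (intro Pi_pmf_union) auto
  also have "Pi_pmf ?U d p = map_pmf ?gK (Pi_pmf K dd ?Q)" using insert by auto
  also have "map_pmf (\<lambda>(f,g) x. if x \<in> S k then f x else g x) (pair_pmf (?Q k) (map_pmf ?gK (Pi_pmf K dd ?Q)))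
     = map_pmf (\<lambda>(y,F). ?g (F(k:=y))) (pair_pmf (?Q k) (Pi_pmf K dd ?Q))"
    unfolding pair_map_pmf2 map_pmf_comp
  proof (intro map_pmf_cong refl)
    fix z assume "z \<in> set_pmf (pair_pmf (?Q k) (Pi_pmf K dd ?Q))"
    obtain y F where z: "z = (y,F)" by (cases z)
    show "(\<lambda>(f,g) x. if x \<in> S k then f x else g x) (apsnd ?gK z) = (\<lambda>(y,F). ?g (F(k:=y))) z"
    proof -
      have "(if x \<in> S k then y x else (if x \<in> ?U then F (\<beta> x) x else d))
          = (if x \<in> (\<Union>k\<in>insert k K. S k) then (F(k:=y)) (\<beta> x) x else d)" for x
      proof (cases "x \<in> S k")
        case True
        hence "\<beta> x = k" using insert.prems by auto
        thus ?thesis using True by simp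
      next
        case False
        show ?thesis
        proof (cases "x \<in> ?U")
          case True
          then obtain k' where k': "k' \<in> K" "x \<in> S k'" by auto
          hence "\<beta> x = k'" using insert.prems by auto
          hence "\<beta> x \<noteq> k" using k' insert.hyps by auto
          thus ?thesis using True False by simp
        qed (use False in auto)
      qed
      hence "(\<lambda>x. if x \<in> S k then y x else (if x \<in> ?U then F (\<beta> x) x else d))
          = (\<lambda>x. if x \<in> (\<Union>k\<in>insert k K. S k) then (F(k:=y)) (\<beta> x) x else d)" by (rule ext)
      thus ?thesis by (simp only: z apsnd_conv prod.case)
    qed
  qed
  also have "\<dots> = map_pmf ?g (Pi_pmf (insert k K) dd ?Q)"
    using insert by (subst Pi_pmf_insert) (auto simp: map_pmf_comp case_prod_unfold)
  finally show ?case .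
qed



definition Sv :: "nat \<Rightarrow> nat set set" where "Sv k = {{j,k} | j. 1 \<le> j \<and> j < k}"
definition glue :: "nat \<Rightarrow> (nat \<Rightarrow> nat set \<Rightarrow> bool) \<Rightarrow> nat set \<Rightarrow> bool" where
  "glue n F e = (if e \<in> pairs n then F (Max e) e else False)"

lemma Sv_image: "Sv k = (\<lambda>j. {j,k}) ` {1..<k}"
  unfolding Sv_def by auto

lemma Max_Sv: "e \<in> Sv k \<Longrightarrow> Max e = k"
  unfolding Sv_def by (auto simp: max_def)

lemma pairs_eq: "pairs n = (\<Union>k\<in>{1..n}. Sv k)"
  unfolding pairs_def Sv_def by fastforce

lemma gnp_eq: "gnp n p = map_pmf (glue n)
   (Pi_pmf {1..n} (\<lambda>_. False) (\<lambda>k. Pi_pmf (Sv k) False (\<lambda>_. bernoulli_pmf p)))"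
proof -
  have "gnp n p = Pi_pmf (\<Union>k\<in>{1..n}. Sv k) False (\<lambda>_. bernoulli_pmf p)"
    unfolding gnp_def pairs_eq ..
  also have "\<dots> = map_pmf (\<lambda>F x. if x \<in> (\<Union>k\<in>{1..n}. Sv k) then F (Max x) x else False)
      (Pi_pmf {1..n} (\<lambda>_. False) (\<lambda>k. Pi_pmf (Sv k) False (\<lambda>_. bernoulli_pmf p)))"
    by (rule Pi_pmf_blocks) (auto simp: Sv_image Max_Sv)
  also have "(\<lambda>F x. if x \<in> (\<Union>k\<in>{1..n}. Sv k) then F (Max x) x else False) = glue n"
    unfolding glue_def pairs_eq by (intro ext) simp
  finally show ?thesis .
qed

lemma cval_bounds: assumes "1 \<le> d" shows "0 \<le> cval d a" "cval d a \<le> 1"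
proof -
  have "(a 0)^2 \<le> inner_d d a a"
  proof -
    have "(\<Sum>k\<in>{0}. (a k)^2) \<le> (\<Sum>k<d. (a k)^2)"
      using assms by (intro sum_mono2) auto
    thus ?thesis unfolding inner_d_def by (simp add: power2_eq_square)
  qed
  moreover have "0 \<le> inner_d d a a" unfolding inner_d_def by (auto intro: sum_nonneg)
  ultimately show "0 \<le> cval d a" "cval d a \<le> 1" unfolding cval_def by auto
qed

lemma cval_zero[simp]: "cval d (\<lambda>_. 0) = 0"
  unfolding cval_def inner_d_def by simp

definition feas :: "nat \<Rightarrow> (nat set \<Rightarrow> bool) \<Rightarrow> nat \<Rightarrow> (nat \<Rightarrow> nat \<Rightarrow> real) \<Rightarrow> bool" where
  "feas n E d v \<longleftrightarrow> d \<ge> 1 \<and> (\<forall>i j. 1 \<le> i \<and> i \<le> n \<and> 1 \<le> j \<and> j \<le> n \<and> i \<noteq> j \<and> E {i, j}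
                 \<longrightarrow> inner_d d (v i) (v j) = 0)"

lemma theta_alt: "lovasz_theta n E = Sup {(\<Sum>i=1..n. cval d (v i)) | d v. feas n E d v}"
  unfolding lovasz_theta_def feas_def ..

lemma theta_bdd: "bdd_above {(\<Sum>i=1..n. cval d (v i)) | d v. feas n E d v}"
proof (rule bdd_aboveI[of _ "real n"])
  fix x assume "x \<in> {(\<Sum>i=1..n. cval d (v i)) | d v. feas n E d v}"
  then obtain d v where x: "x = (\<Sum>i=1..n. cval d (v i))" "feas n E d v" by auto
  have "x \<le> (\<Sum>i=1..n. 1)" unfolding x(1) using x(2) cval_bounds(2)
    by (intro sum_mono) (auto simp: feas_def)
  thus "x \<le> real n" by simp
qed

lemma theta_upper: "feas n E d v \<Longrightarrow> (\<Sum>i=1..n. cval d (v i)) \<le> lovasz_theta n E"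
  unfolding theta_alt by (rule cSup_upper[OF _ theta_bdd]) auto

lemma theta_approx:
  assumes "0 < e"
  obtains d v where "feas n E d v" "lovasz_theta n E - e < (\<Sum>i=1..n. cval d (v i))"
proof -
  have "feas n E 1 (\<lambda>_ _. 0)" by (simp add: feas_def inner_d_def)
  hence ne: "{(\<Sum>i=1..n. cval d (v i)) | d v. feas n E d v} \<noteq> {}" by blast
  have "lovasz_theta n E - e < Sup {(\<Sum>i=1..n. cval d (v i)) | d v. feas n E d v}"
    using assms unfolding theta_alt by simp
  from less_cSupD[OF ne this] show ?thesis using that by blast
qed



lemma main_rho:
  fixes F :: "nat \<Rightarrow> nat set \<Rightarrow> bool"
  assumes A_def: "A = {F. lovasz_theta n (glue n F) \<le> m}" and neA: "A \<noteq> {}"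
    and th0: "0 < \<theta>0" and xi: "0 < \<xi>"
    and lo: "m + \<xi> \<le> lovasz_theta n (glue n F)" and hi: "lovasz_theta n (glue n F) \<le> \<theta>0"
  shows "4*\<xi>^2/(5*\<theta>0) \<le> rho2 {1..n} A F"
proof (rule rho2_greatest[OF neA])
  fix \<nu> assume setn: "set_pmf \<nu> \<subseteq> A"
  let ?G = "glue n F"
  obtain d v where fv: "feas n ?G d v"
    and close: "lovasz_theta n ?G - \<xi>/10 < (\<Sum>i=1..n. cval d (v i))"
    using theta_approx[of "\<xi>/10" n ?G] xi by auto
  define c where "c i = cval d (v i)" for i
  have d1: "1 \<le> d" using fv by (simp add: feas_def)
  have c0: "0 \<le> c i" and c1: "c i \<le> 1" for i unfolding c_def using cval_bounds[OF d1] by auto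
  define T where "T = (\<Sum>i=1..n. c i)"
  have T_le: "T \<le> lovasz_theta n ?G" unfolding T_def c_def by (rule theta_upper[OF fv])
  have csq: "(\<Sum>i\<in>{1..n}. (c i)^2) \<le> \<theta>0"
  proof -
    have "(\<Sum>i\<in>{1..n}. (c i)^2) \<le> (\<Sum>i\<in>{1..n}. c i)"
      using c0 c1 by (intro sum_mono) (simp add: power2_eq_square mult_left_le)
    thus ?thesis using T_le hi unfolding T_def by linarith
  qed
  define ind where "ind y i = (if y i \<noteq> F i then 1 else 0::real)" for y i
  have diffb: "9/10 * \<xi> \<le> (\<Sum>i=1..n. c i * ind y i)" if yA: "y \<in> A" for y
  proof -
    define w where "w i = (if y i \<noteq> F i then (\<lambda>_. 0) else v i)" for i
    have fw: "feas n (glue n y) d w"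
      unfolding feas_def
    proof (intro conjI d1 allI impI)
      fix i j assume ij: "1 \<le> i \<and> i \<le> n \<and> 1 \<le> j \<and> j \<le> n \<and> i \<noteq> j \<and> glue n y {i, j}"
      show "inner_d d (w i) (w j) = 0"
      proof (cases "y i \<noteq> F i \<or> y j \<noteq> F j")
        case True
        thus ?thesis unfolding w_def inner_d_def by auto
      next
        case False
        have mx: "Max {i,j} = i \<or> Max {i,j} = j" by (auto simp: max_def)
        hence eqM: "y (Max {i,j}) = F (Max {i,j})" using False by auto
        have "{i,j} \<in> pairs n"
        proof (cases "i < j")
          case True thus ?thesis using ij unfolding pairs_def by blast
        next
          case False
          hence "j < i" using ij by auto
          hence "{j,i} \<in> pairs n" using ij unfolding pairs_def by blast
          thus ?thesis by (simp add: insert_commute)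
        qed
        hence "glue n F {i,j}" using ij eqM unfolding glue_def by simp
        hence "inner_d d (v i) (v j) = 0" using fv ij unfolding feas_def by blast
        thus ?thesis using False unfolding w_def by simp
      qed
    qed
    have "(\<Sum>i=1..n. cval d (w i)) \<le> lovasz_theta n (glue n y)" by (rule theta_upper[OF fw])
    also have "\<dots> \<le> m" using yA unfolding A_def by simp
    finally have wm: "(\<Sum>i=1..n. cval d (w i)) \<le> m" .
    have "(\<Sum>i=1..n. cval d (w i)) + (\<Sum>i=1..n. c i * ind y i) = T"
      unfolding T_def sum.distrib[symmetric] by (intro sum.cong refl) (simp add: w_def c_def ind_def)
    thus ?thesis using wm close lo unfolding T_def c_def by linarith
  qed
  define P where "P i = measure_pmf.prob \<nu> {y. y i \<noteq> F i}" for i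
  have Pint: "P i = (\<integral>y. ind y i \<partial>\<nu>)" for i
  proof -
    have "P i = (\<integral>y. indicator {y. y i \<noteq> F i} y \<partial>\<nu>)" unfolding P_def by simp
    also have "\<dots> = (\<integral>y. ind y i \<partial>\<nu>)" by (intro Bochner_Integration.integral_cong refl) (simp add: ind_def indicator_def)
    finally show ?thesis .
  qed
  have intind: "integrable \<nu> (\<lambda>y. ind y i)" for i
    by (rule pmf_integrable_bounded[of _ 1]) (simp add: ind_def)
  have sumP: "(\<Sum>i\<in>{1..n}. c i * P i) = (\<integral>y. (\<Sum>i=1..n. c i * ind y i) \<partial>\<nu>)"
    unfolding Pint
    by (subst Bochner_Integration.integral_sum) (auto intro!: integrable_mult_right intind)
  also have "\<dots> \<ge> 9/10 * \<xi>"
  proof (rule measure_pmf.integral_ge_const)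
    show "integrable \<nu> (\<lambda>y. \<Sum>i=1..n. c i * ind y i)" by (intro Bochner_Integration.integrable_sum integrable_mult_right intind)
    show "AE y in \<nu>. 9/10 * \<xi> \<le> (\<Sum>i=1..n. c i * ind y i)"
      by (rule AE_pmfI) (use diffb setn in auto)
  qed
  finally have sP: "9/10 * \<xi> \<le> (\<Sum>i\<in>{1..n}. c i * P i)" .
  have "(9/10 * \<xi>)^2 \<le> (\<Sum>i\<in>{1..n}. c i * P i)^2"
    using sP xi by (intro power_mono) auto
  also have "\<dots> \<le> (\<Sum>i\<in>{1..n}. (c i)^2) * (\<Sum>i\<in>{1..n}. (P i)^2)"
    by (rule Cauchy_Schwarz_ineq_sum)
  also have "\<dots> \<le> \<theta>0 * (\<Sum>i\<in>{1..n}. (P i)^2)"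
    using csq by (intro mult_right_mono) (auto intro: sum_nonneg)
  finally have key: "(9/10 * \<xi>)^2 \<le> \<theta>0 * dsum {1..n} \<nu> F"
    unfolding dsum_def P_def .
  have "4*\<xi>^2/(5*\<theta>0) \<le> (9/10 * \<xi>)^2 / \<theta>0"
  proof -
    have "4*\<xi>^2/(5*\<theta>0) = (4/5*\<xi>^2)/\<theta>0" by simp
    also have "\<dots> \<le> (9/10 * \<xi>)^2 / \<theta>0"
      using th0 by (intro divide_right_mono) (auto simp: power2_eq_square)
    finally show ?thesis .
  qed
  also have "\<dots> \<le> dsum {1..n} \<nu> F" using key th0 by (simp add: divide_le_eq mult.commute)
  finally show "4*\<xi>^2/(5*\<theta>0) \<le> dsum {1..n} \<nu> F" .
qed

theorem lemma1:
  fixes n :: nat and p m \<theta>0 \<xi> :: real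
  assumes "0 < p" "p < 1"
    and "measure_pmf.prob (gnp n p) {E. lovasz_theta n E \<le> m} \<ge> 1/2"
    and "measure_pmf.prob (gnp n p) {E. lovasz_theta n E \<ge> m} \<ge> 1/2"
    and "\<theta>0 > 0" and "\<xi> \<ge> 10"
  shows "measure_pmf.prob (gnp n p) {E. m + \<xi> \<le> lovasz_theta n E \<and> lovasz_theta n E \<le> \<theta>0}
           \<le> 2 * exp (- (\<xi>^2) / (5 * \<theta>0))"
proof -
  define X where "X = Pi_pmf {1..n} (\<lambda>_. False) (\<lambda>k. Pi_pmf (Sv k) False (\<lambda>_. bernoulli_pmf p))"
  have gX: "gnp n p = map_pmf (glue n) X" unfolding X_def by (rule gnp_eq)
  define A where "A = {F. lovasz_theta n (glue n F) \<le> m}"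
  have pA: "measure_pmf.prob X A \<ge> 1/2"
    using assms(3) unfolding gX A_def by (simp add: vimage_def)
  hence pA0: "0 < measure_pmf.prob X A" by linarith
  hence neA: "A \<noteq> {}" by auto
  define s where "s = 4*\<xi>^2/(5*\<theta>0)"
  have "measure_pmf.prob (gnp n p) {E. m + \<xi> \<le> lovasz_theta n E \<and> lovasz_theta n E \<le> \<theta>0}
      = measure_pmf.prob X {F. m + \<xi> \<le> lovasz_theta n (glue n F) \<and> lovasz_theta n (glue n F) \<le> \<theta>0}"
    unfolding gX by (simp add: vimage_def)
  also have "\<dots> \<le> measure_pmf.prob X {F. s \<le> rho2 {1..n} A F}"
    using main_rho[OF A_def neA assms(5)] assms(6) unfolding s_def
    by (intro measure_pmf.finite_measure_mono) auto
  also have "\<dots> \<le> exp (-s/4) / measure_pmf.prob X A"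
    unfolding X_def by (rule talagrand_tail) (use pA0 in \<open>auto simp: X_def\<close>)
  also have "\<dots> \<le> exp (-s/4) / (1/2)"
    using pA by (intro divide_left_mono) auto
  also have "exp (-s/4) / (1/2) = 2 * exp (- (\<xi>^2) / (5 * \<theta>0))"
    unfolding s_def by simp
  finally show ?thesis .
qed

end
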